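(* Let $\mathcal{F}=\{N_r:r\in\mathbb{N}\}$ be a countable almost disjoint family of infinite subsets of $\mathbb{N}$ and let $(\lambda_{i,j})_{i,j\in\mathbb{N}}$ be a real matrix such that: (i) $\lim_{i\to\infty}\lambda_{i,j}=0$ for every $j\in\mathbb{N}$; (ii) $\sum_{j\in\mathbb{N}}|\lambda_{i,j}|<\infty$ for every $i\in\mathbb{N}$; (iii) $\lim_{i\to\infty}\sum_{j\in\mathbb{N}}\lambda_{i,j}=1$. If $\lim_{i\to\infty}\sum_{j\in N_1\cup\dots\cup N_r}\lambda_{i,j}=0$ for every $r\in\mathbb{N}$, then there exists an infinite set $N'\subset\mathbb{N}$ such that $\mathcal{F}\cup\{N'\}$ is almost disjoint and $\limsup_{i\to\infty}\sum_{j\in N'}\lambda_{i,j}\ge\frac12$.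
   Context: An almost disjoint family is an infinite family of pairwise almost disjoint infinite subsets of $\mathbb{N}$, where two sets are almost disjoint if their intersection is finite. *)

theory Defs
  imports "HOL-Analysis.Analysis"
begin

definition almost_disjoint_family :: "nat set set \<Rightarrow> bool" where
  "almost_disjoint_family F \<longleftrightarrow>
     infinite F \<and> (\<forall>A\<in>F. infinite A) \<and> (\<forall>A\<in>F. \<forall>B\<in>F. A \<noteq> B \<longrightarrow> finite (A \<inter> B))"

end

theory Submission
  imports Defs
begin


lemma AS_summable_on:
  fixes f :: "nat \<Rightarrow> real"
  assumes "summable (\<lambda>j. \<bar>f j\<bar>)"
  shows "f summable_on A"
proof -
  have "f summable_on UNIV" using norm_summable_imp_summable_on[of f] assms by simp
  then show ?thesis by (rule summable_on_subset_banach) simp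
qed

lemma AS_abs_summable_on:
  fixes f :: "nat \<Rightarrow> real"
  assumes "summable (\<lambda>j. \<bar>f j\<bar>)"
  shows "(\<lambda>j. \<bar>f j\<bar>) summable_on A"
  using AS_summable_on[of "\<lambda>j. \<bar>f j\<bar>"] assms by simp

lemma AS_UNIV:
  fixes f :: "nat \<Rightarrow> real"
  assumes "summable (\<lambda>j. \<bar>f j\<bar>)"
  shows "infsum f UNIV = suminf f"
proof -
  have "summable f" using assms summable_norm_cancel[of f] by simp
  then have "f sums suminf f" by (rule summable_sums)
  then show ?thesis using norm_summable_imp_has_sum[of f] assms by (simp add: infsumI)
qed

lemma AS_mono:
  fixes f :: "nat \<Rightarrow> real"
  assumes "summable (\<lambda>j. \<bar>f j\<bar>)" "A \<subseteq> B"
  shows "infsum (\<lambda>j. \<bar>f j\<bar>) A \<le> infsum (\<lambda>j. \<bar>f j\<bar>) B"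
  by (rule infsum_mono_neutral) (use assms AS_abs_summable_on in auto)

lemma AS_diff:
  fixes f :: "nat \<Rightarrow> real"
  assumes "summable (\<lambda>j. \<bar>f j\<bar>)"
  shows "\<bar>infsum f A - infsum f B\<bar> \<le> infsum (\<lambda>j. \<bar>f j\<bar>) (A - B) + infsum (\<lambda>j. \<bar>f j\<bar>) (B - A)"
proof -
  have s: "\<And>X. f summable_on X" using AS_summable_on assms by blast
  have a: "A = (A \<inter> B) \<union> (A - B)" and b: "B = (A \<inter> B) \<union> (B - A)" by auto
  have ea: "infsum f A = infsum f (A \<inter> B) + infsum f (A - B)"
    by (subst a, rule infsum_Un_disjoint) (use s in auto)
  have eb: "infsum f B = infsum f (A \<inter> B) + infsum f (B - A)"
    by (subst b, rule infsum_Un_disjoint) (use s in auto)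
  have n: "\<And>X. \<bar>infsum f X\<bar> \<le> infsum (\<lambda>j. \<bar>f j\<bar>) X"
    using norm_infsum_bound[of f] s summable_on_iff_abs_summable_on_real by fastforce
  show ?thesis using ea eb n[of "A - B"] n[of "B - A"] by linarith
qed

lemma AS_tail:
  fixes f :: "nat \<Rightarrow> real"
  assumes "summable (\<lambda>j. \<bar>f j\<bar>)"
  shows "(\<lambda>n. infsum (\<lambda>j. \<bar>f j\<bar>) {n..}) \<longlonglongrightarrow> 0"
proof -
  have e: "infsum (\<lambda>j. \<bar>f j\<bar>) {n..} = suminf (\<lambda>j. \<bar>f j\<bar>) - (\<Sum>j<n. \<bar>f j\<bar>)" for n
  proof -
    have u: "UNIV = {..<n} \<union> {n..}" by auto
    have "infsum (\<lambda>j. \<bar>f j\<bar>) ({..<n} \<union> {n..}) = infsum (\<lambda>j. \<bar>f j\<bar>) {..<n} + infsum (\<lambda>j. \<bar>f j\<bar>) {n..}"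
      by (rule infsum_Un_disjoint[OF AS_abs_summable_on[OF assms] AS_abs_summable_on[OF assms]]) auto
    then have "infsum (\<lambda>j. \<bar>f j\<bar>) UNIV = infsum (\<lambda>j. \<bar>f j\<bar>) {..<n} + infsum (\<lambda>j. \<bar>f j\<bar>) {n..}"
      by (simp only: u[symmetric])
    moreover have "infsum (\<lambda>j. \<bar>f j\<bar>) UNIV = suminf (\<lambda>j. \<bar>f j\<bar>)"
      using AS_UNIV[of "\<lambda>j. \<bar>f j\<bar>"] assms by simp
    ultimately show ?thesis by simp
  qed
  have "(\<lambda>n. \<Sum>j<n. \<bar>f j\<bar>) \<longlonglongrightarrow> suminf (\<lambda>j. \<bar>f j\<bar>)"
    using assms summable_LIMSEQ by blast
  then have "(\<lambda>n. suminf (\<lambda>j. \<bar>f j\<bar>) - (\<Sum>j<n. \<bar>f j\<bar>)) \<longlonglongrightarrow> suminf (\<lambda>j. \<bar>f j\<bar>) - suminf (\<lambda>j. \<bar>f j\<bar>)"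
    by (intro tendsto_diff tendsto_const)
  then show ?thesis by (simp add: e)
qed


theorem lemma4p11:
  fixes N :: "nat \<Rightarrow> nat set" and lam :: "nat \<Rightarrow> nat \<Rightarrow> real"
  assumes AD: "almost_disjoint_family (range N)"
    and i: "\<And>j. (\<lambda>i. lam i j) \<longlonglongrightarrow> 0"
    and ii: "\<And>i. summable (\<lambda>j. \<bar>lam i j\<bar>)"
    and iii: "(\<lambda>i. \<Sum>j. lam i j) \<longlonglongrightarrow> 1"
    and H: "\<And>r. (\<lambda>i. \<Sum>\<^sub>\<infinity>j\<in>(\<Union>k\<le>r. N k). lam i j) \<longlonglongrightarrow> 0"
  shows "\<exists>N'. infinite N' \<and> almost_disjoint_family (insert N' (range N)) \<and>
           limsup (\<lambda>i. ereal (\<Sum>\<^sub>\<infinity>j\<in>N'. lam i j)) \<ge> ereal (1/2)"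
proof -
  define S where "S m = (\<Union>k\<le>m. N k)" for m
  have exI: "\<exists>i>i0. (\<Sum>j<b. \<bar>lam i j\<bar>) < 1/20 \<and> \<bar>infsum (lam i) (S m)\<bar> < 1/10 \<and> suminf (lam i) > 9/10"
    for m b i0
  proof -
    have "(\<lambda>i. \<Sum>j<b. \<bar>lam i j\<bar>) \<longlonglongrightarrow> (\<Sum>j<b. 0)"
      by (intro tendsto_sum tendsto_rabs_zero i)
    then have e1: "\<forall>\<^sub>F i in sequentially. (\<Sum>j<b. \<bar>lam i j\<bar>) < 1/20"
      by (intro order_tendstoD(2)) auto
    have "(\<lambda>i. \<bar>infsum (lam i) (S m)\<bar>) \<longlonglongrightarrow> 0"
      using H[of m] unfolding S_def by (intro tendsto_rabs_zero) simp
    then have e2: "\<forall>\<^sub>F i in sequentially. \<bar>infsum (lam i) (S m)\<bar> < 1/10"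
      by (intro order_tendstoD(2)) auto
    have e3: "\<forall>\<^sub>F i in sequentially. suminf (lam i) > 9/10"
      using iii by (intro order_tendstoD(1)) auto
    have e4: "\<forall>\<^sub>F i in sequentially. i > i0" by (rule eventually_gt_at_top)
    have "\<forall>\<^sub>F i in sequentially. i > i0 \<and> (\<Sum>j<b. \<bar>lam i j\<bar>) < 1/20 \<and> \<bar>infsum (lam i) (S m)\<bar> < 1/10 \<and> suminf (lam i) > 9/10"
      using e1 e2 e3 e4 by eventually_elim auto
    then obtain n0 where "\<And>k. k \<ge> n0 \<Longrightarrow> k > i0 \<and> (\<Sum>j<b. \<bar>lam k j\<bar>) < 1/20 \<and> \<bar>infsum (lam k) (S m)\<bar> < 1/10 \<and> suminf (lam k) > 9/10"
      unfolding eventually_sequentially by blast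
    then show ?thesis by blast
  qed
  have exB: "\<exists>b'>b. infsum (\<lambda>j. \<bar>lam i j\<bar>) {b'..} < 1/20" for i b
  proof -
    have "\<forall>\<^sub>F n in sequentially. infsum (\<lambda>j. \<bar>lam i j\<bar>) {n..} < 1/20"
      using AS_tail[OF ii[of i]] by (intro order_tendstoD(2)) auto
    moreover have "\<forall>\<^sub>F n in sequentially. n > b" by (rule eventually_gt_at_top)
    ultimately have "\<forall>\<^sub>F n in sequentially. n > b \<and> infsum (\<lambda>j. \<bar>lam i j\<bar>) {n..} < 1/20"
      by eventually_elim auto
    then obtain n0 where "\<And>k. k \<ge> n0 \<Longrightarrow> k > b \<and> infsum (\<lambda>j. \<bar>lam i j\<bar>) {k..} < 1/20"
      unfolding eventually_sequentially by blast
    then show ?thesis by blast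
  qed
  obtain I where I: "\<forall>m b i0. I m b i0 > i0 \<and> (\<Sum>j<b. \<bar>lam (I m b i0) j\<bar>) < 1/20 \<and>
      \<bar>infsum (lam (I m b i0)) (S m)\<bar> < 1/10 \<and> suminf (lam (I m b i0)) > 9/10"
  proof -
    define I0 where "I0 m b i0 = (SOME i. i>i0 \<and> (\<Sum>j<b. \<bar>lam i j\<bar>) < 1/20 \<and> \<bar>infsum (lam i) (S m)\<bar> < 1/10 \<and> suminf (lam i) > 9/10)" for m b i0
    have "I0 m b i0 > i0 \<and> (\<Sum>j<b. \<bar>lam (I0 m b i0) j\<bar>) < 1/20 \<and>
      \<bar>infsum (lam (I0 m b i0)) (S m)\<bar> < 1/10 \<and> suminf (lam (I0 m b i0)) > 9/10" for m b i0
      unfolding I0_def by (rule someI_ex[OF exI])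
    then show ?thesis using that by blast
  qed
  obtain B where B: "\<forall>i b. B i b > b \<and> infsum (\<lambda>j. \<bar>lam i j\<bar>) {B i b..} < 1/20"
  proof -
    define B0 where "B0 i b = (SOME b'. b'>b \<and> infsum (\<lambda>j. \<bar>lam i j\<bar>) {b'..} < 1/20)" for i b
    have "B0 i b > b \<and> infsum (\<lambda>j. \<bar>lam i j\<bar>) {B0 i b..} < 1/20" for i b
      unfolding B0_def by (rule someI_ex[OF exB])
    then show ?thesis using that by blast
  qed
  define st where "st = rec_nat (0::nat, 0::nat) (\<lambda>m p. (I m (snd p) (fst p), B (I m (snd p) (fst p)) (snd p)))"
  have st0: "st 0 = (0, 0)" by (simp add: st_def)
  have stS: "st (Suc m) = (I m (snd (st m)) (fst (st m)), B (I m (snd (st m)) (fst (st m))) (snd (st m)))" for m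
    by (simp add: st_def)
  define ix where "ix m = fst (st (Suc m))" for m
  define bb where "bb m = snd (st m)" for m
  have ixe: "ix m = I m (bb m) (fst (st m))" for m by (simp add: ix_def bb_def stS)
  have bbS: "bb (Suc m) = B (ix m) (bb m)" for m by (simp add: ix_def bb_def stS)
  have P1: "(\<Sum>j<bb m. \<bar>lam (ix m) j\<bar>) < 1/20" for m unfolding ixe using I[rule_format, of "fst (st m)" m "bb m"] by blast
  have P2: "\<bar>infsum (lam (ix m)) (S m)\<bar> < 1/10" for m unfolding ixe using I[rule_format, of "fst (st m)" m "bb m"] by blast
  have P3: "suminf (lam (ix m)) > 9/10" for m unfolding ixe using I[rule_format, of "fst (st m)" m "bb m"] by blast
  have P4: "infsum (\<lambda>j. \<bar>lam (ix m) j\<bar>) {bb (Suc m)..} < 1/20" for m unfolding bbS using B[rule_format, of "bb m" "ix m"] by blast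
  have smb: "strict_mono bb" unfolding strict_mono_Suc_iff bbS using B by blast
  have smi: "strict_mono ix" unfolding strict_mono_Suc_iff
  proof
    fix m
    have "ix (Suc m) = I (Suc m) (bb (Suc m)) (ix m)" using ixe[of "Suc m"] by (simp add: ix_def)
    then show "ix m < ix (Suc m)" using I[rule_format, of "ix m" "Suc m" "bb (Suc m)"] by simp
  qed
  have bbmono: "m \<le> m' \<Longrightarrow> bb m \<le> bb m'" for m m' using smb strict_mono_less_eq by blast
  have Smono: "m \<le> m' \<Longrightarrow> S m \<subseteq> S m'" for m m' unfolding S_def using le_trans by fastforce
  define F where "F m = {bb m..<bb (Suc m)} - S m" for m
  define N' where "N' = (\<Union>m. F m)"
  define D where "D m = {..<bb m} \<union> {bb (Suc m)..}" for m
  have K1: "N' \<inter> S m \<subseteq> {..<bb m}" for m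
  proof
    fix x assume x: "x \<in> N' \<inter> S m"
    then obtain m' where m': "x \<in> F m'" unfolding N'_def by auto
    show "x \<in> {..<bb m}"
    proof (cases "m \<le> m'")
      case True then show ?thesis using m' x Smono[OF True] unfolding F_def by auto
    next
      case False then have "bb (Suc m') \<le> bb m" using bbmono by simp
      then show ?thesis using m' unfolding F_def by auto
    qed
  qed
  have K2: "(- S m) - N' \<subseteq> D m" for m
  proof
    fix x assume x: "x \<in> (- S m) - N'"
    have "F m \<subseteq> N'" unfolding N'_def by auto
    then have "x \<notin> F m" using x by auto
    then show "x \<in> D m" using x unfolding F_def D_def by auto
  qed
  have K4: "(- S m) - F m \<subseteq> D m" for m unfolding D_def F_def by auto
  have KD: "N' \<inter> S m \<subseteq> D m" for m using K1 unfolding D_def by auto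
  have Dsum: "infsum (\<lambda>j. \<bar>lam (ix m) j\<bar>) (D m) < 1/10" for m
  proof -
    have "bb m < bb (Suc m)" using smb strict_mono_Suc_iff by blast
    then have "{..<bb m} \<inter> {bb (Suc m)..} = {}" by auto
    then have "infsum (\<lambda>j. \<bar>lam (ix m) j\<bar>) (D m) = infsum (\<lambda>j. \<bar>lam (ix m) j\<bar>) {..<bb m} + infsum (\<lambda>j. \<bar>lam (ix m) j\<bar>) {bb (Suc m)..}"
      unfolding D_def by (intro infsum_Un_disjoint AS_abs_summable_on ii)
    then show ?thesis using P1[of m] P4[of m] by simp
  qed
  have compl: "infsum (lam (ix m)) (- S m) > 8/10" for m
  proof -
    have "infsum (lam (ix m)) (S m \<union> - S m) = infsum (lam (ix m)) (S m) + infsum (lam (ix m)) (- S m)"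
      by (intro infsum_Un_disjoint AS_summable_on ii) auto
    then have "suminf (lam (ix m)) = infsum (lam (ix m)) (S m) + infsum (lam (ix m)) (- S m)"
      using AS_UNIV[OF ii] by simp
    then show ?thesis using P2[of m] P3[of m] by linarith
  qed
  have big: "infsum (lam (ix m)) N' > 6/10" for m
  proof -
    have "\<bar>infsum (lam (ix m)) N' - infsum (lam (ix m)) (- S m)\<bar> \<le>
       infsum (\<lambda>j. \<bar>lam (ix m) j\<bar>) (N' - (- S m)) + infsum (\<lambda>j. \<bar>lam (ix m) j\<bar>) ((- S m) - N')"
      by (rule AS_diff[OF ii])
    moreover have "infsum (\<lambda>j. \<bar>lam (ix m) j\<bar>) (N' - (- S m)) \<le> infsum (\<lambda>j. \<bar>lam (ix m) j\<bar>) (D m)"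
      using KD[of m] by (intro AS_mono[OF ii]) auto
    moreover have "infsum (\<lambda>j. \<bar>lam (ix m) j\<bar>) ((- S m) - N') \<le> infsum (\<lambda>j. \<bar>lam (ix m) j\<bar>) (D m)"
      using K2[of m] by (intro AS_mono[OF ii]) auto
    ultimately show ?thesis using Dsum[of m] compl[of m] by linarith
  qed
  have Fne: "F m \<noteq> {}" for m
  proof
    assume e: "F m = {}"
    have "\<bar>infsum (lam (ix m)) (F m) - infsum (lam (ix m)) (- S m)\<bar> \<le>
       infsum (\<lambda>j. \<bar>lam (ix m) j\<bar>) (F m - (- S m)) + infsum (\<lambda>j. \<bar>lam (ix m) j\<bar>) ((- S m) - F m)"
      by (rule AS_diff[OF ii])
    moreover have "infsum (\<lambda>j. \<bar>lam (ix m) j\<bar>) ((- S m) - F m) \<le> infsum (\<lambda>j. \<bar>lam (ix m) j\<bar>) (D m)"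
      using K4[of m] by (intro AS_mono[OF ii]) auto
    ultimately show False using e Dsum[of m] compl[of m] by simp
  qed
  have infN': "infinite N'"
    unfolding infinite_nat_iff_unbounded_le
  proof
    fix m
    obtain x where "x \<in> F m" using Fne by blast
    then have "x \<ge> bb m" "x \<in> N'" unfolding F_def N'_def by auto
    moreover have "bb m \<ge> m" using seq_suble[OF smb] .
    ultimately show "\<exists>n\<ge>m. n \<in> N'" using le_trans by blast
  qed
  have finK: "finite (N' \<inter> N k)" for k
  proof -
    have "N' \<inter> N k \<subseteq> {..<bb k}" using K1[of k] unfolding S_def by auto
    then show ?thesis using finite_subset by blast
  qed
  have ADN: "almost_disjoint_family (insert N' (range N))"
  proof -
    have a1: "infinite (range N)" and a2: "\<And>A. A \<in> range N \<Longrightarrow> infinite A"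
      and a3: "\<And>A B. A \<in> range N \<Longrightarrow> B \<in> range N \<Longrightarrow> A \<noteq> B \<Longrightarrow> finite (A \<inter> B)"
      using AD unfolding almost_disjoint_family_def by blast+
    have p: "finite (A \<inter> B)" if "A \<in> insert N' (range N)" "B \<in> insert N' (range N)" "A \<noteq> B" for A B
    proof (cases "A = N'")
      case True
      then have "B \<in> range N" using that by auto
      then show ?thesis using True finK by auto
    next
      case False
      then have A: "A \<in> range N" using that by auto
      show ?thesis
      proof (cases "B = N'")
        case True
        then show ?thesis using A finK by (auto simp: Int_commute)
      next
        case False
        then show ?thesis using A that a3 by auto
      qed
    qed
    show ?thesis unfolding almost_disjoint_family_def
      using a1 a2 p infN' by auto
  qed
  have "ereal (1/2) \<le> limsup ((\<lambda>i. ereal (\<Sum>\<^sub>\<infinity>j\<in>N'. lam i j)) \<circ> ix)"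
  proof (intro le_Limsup always_eventually allI)
    fix m
    have "(1/2::real) \<le> infsum (lam (ix m)) N'" using big[of m] by linarith
    then show "ereal (1/2) \<le> ((\<lambda>i. ereal (\<Sum>\<^sub>\<infinity>j\<in>N'. lam i j)) \<circ> ix) m" by simp
  qed simp
  also have "\<dots> \<le> limsup (\<lambda>i. ereal (\<Sum>\<^sub>\<infinity>j\<in>N'. lam i j))"
    by (rule limsup_subseq_mono[OF smi])
  finally show ?thesis using infN' ADN by blast
qed

end
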